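(* There are infinitely many positive integers $N$ for which there is no representation $N=A/B$ with $A,B$ antipalindromic numbers.
   Context: A positive integer $n$ is antipalindromic if its binary representation $w=w_1\cdots w_L$ (most significant digit first, no leading zeros) has even length $L$ and satisfies $w_i+w_{L+1-i}=1$ for all $i$. *)

theory Defs
  imports Main
begin

definition bin_digit :: "nat \<Rightarrow> nat \<Rightarrow> nat" where
  "bin_digit n i = (n div 2 ^ i) mod 2"

definition bin_len :: "nat \<Rightarrow> nat" where
  "bin_len n = (LEAST L. n < 2 ^ L)"

text \<open>n antipalindromic: n > 0, binary length L even, and w_i + w_{L+1-i} = 1 for all i.
  Indexing from the least significant digit, w_i (msd-first, 1-based) is bin_digit n (L-i),
  so the condition is bin_digit n j + bin_digit n (L-1-j) = 1 for all j < L.\<close>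
definition antipalindromic :: "nat \<Rightarrow> bool" where
  "antipalindromic n \<longleftrightarrow> n > 0 \<and> even (bin_len n) \<and>
     (\<forall>j < bin_len n. bin_digit n j + bin_digit n (bin_len n - 1 - j) = 1)"

end

theory Submission
  imports Defs
begin

lemma bin_len_eq:
  assumes "n < 2 ^ L" "\<And>y. n < 2 ^ y \<Longrightarrow> L \<le> y"
  shows "bin_len n = L"
  unfolding bin_len_def using assms by (intro Least_equality) auto

lemma bin_len_prop:
  "n < 2 ^ bin_len n" "n < 2 ^ y \<Longrightarrow> bin_len n \<le> y"
proof -
  have "n < 2 ^ n" by simp
  then show "n < 2 ^ bin_len n" unfolding bin_len_def by (rule LeastI)
  show "n < 2 ^ y \<Longrightarrow> bin_len n \<le> y" unfolding bin_len_def by (rule Least_le)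
qed

lemma bin_len_shift:
  assumes "B > 0"
  shows "bin_len (2 ^ m * B) = bin_len B + m"
proof (rule bin_len_eq)
  show "2 ^ m * B < 2 ^ (bin_len B + m)"
    using bin_len_prop(1)[of B] by (simp add: power_add)
  fix y assume y: "2 ^ m * B < (2::nat) ^ y"
  have "(2::nat) ^ m \<le> 2 ^ m * B" using assms by simp
  then have "(2::nat) ^ m < 2 ^ y" using y by linarith
  then have my: "m \<le> y" by simp
  then have "2 ^ y = (2::nat) ^ m * 2 ^ (y - m)" by (simp flip: power_add)
  then have "B < 2 ^ (y - m)" using y by simp
  then have "bin_len B \<le> y - m" by (rule bin_len_prop(2))
  then show "bin_len B + m \<le> y" using my by simp
qed

lemma digit_shift: "bin_digit (2 ^ m * B) (p + m) = bin_digit B p"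
  unfolding bin_digit_def by (simp add: power_add div_mult_mult1)

lemma digit_low:
  assumes "t < m" shows "bin_digit (2 ^ m * B) t = 0"
proof -
  have "(2::nat) ^ m * B = 2 ^ t * (2 ^ (m - t) * B)" using assms
    by (simp add: power_add[symmetric] mult.assoc[symmetric])
  then have "(2::nat) ^ m * B div 2 ^ t = 2 ^ (m - t) * B"
    by (metis nonzero_mult_div_cancel_left power_not_zero zero_neq_numeral)
  moreover have "even ((2::nat) ^ (m - t) * B)" using assms by simp
  ultimately show ?thesis unfolding bin_digit_def by simp
qed

lemma digit_big:
  assumes "B < 2 ^ L" "L \<le> t" shows "bin_digit B t = 0"
proof -
  have "(2::nat) ^ L \<le> 2 ^ t" using assms(2) by simp
  then have "B < 2 ^ t" using assms(1) by linarith
  then show ?thesis unfolding bin_digit_def by simp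
qed

lemma no_rep:
  assumes m: "m \<ge> 1" and A: "antipalindromic (2 ^ m * B)" and B: "antipalindromic B"
  shows False
proof -
  define L where "L = bin_len B"
  have Bpos: "B > 0" using B unfolding antipalindromic_def by simp
  have BL: "B < 2 ^ L" unfolding L_def by (rule bin_len_prop(1))
  have Lpos: "L > 0" using BL Bpos by (cases L) auto
  have Bc: "\<And>j. j < L \<Longrightarrow> bin_digit B j + bin_digit B (L - 1 - j) = 1"
    using B unfolding antipalindromic_def L_def by auto
  have AL: "bin_len (2 ^ m * B) = L + m" using bin_len_shift[OF Bpos] L_def by simp
  have Ac: "\<And>j. j < L + m \<Longrightarrow> bin_digit (2^m*B) j + bin_digit (2^m*B) (L + m - 1 - j) = 1"
    using A unfolding antipalindromic_def AL by auto
  have "\<exists>t. bin_digit B t = 1"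
  proof -
    have "bin_digit B 0 + bin_digit B (L - 1 - 0) = 1" using Bc[of 0] Lpos by simp
    then have "bin_digit B 0 = 1 \<or> bin_digit B (L - 1 - 0) = 1" by arith
    then show ?thesis by blast
  qed
  define t where "t = (LEAST t. bin_digit B t = 1)"
  have t1: "bin_digit B t = 1" unfolding t_def using \<open>\<exists>t. bin_digit B t = 1\<close> by (rule LeastI_ex)
  have tmin: "\<And>i. i < t \<Longrightarrow> bin_digit B i \<noteq> 1" unfolding t_def by (rule not_less_Least)
  have tL: "t < L"
  proof (rule ccontr)
    assume "\<not> t < L" then have "bin_digit B t = 0" using digit_big[OF BL, of t] by linarith
    then show False using t1 by simp
  qed
  have d1: "bin_digit B (L - 1 - t) = 0" using Bc[OF tL] t1 by simp
  have d2: "bin_digit (2^m*B) t = 0"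
  proof (cases "t < m")
    case True then show ?thesis by (rule digit_low)
  next
    case False
    then have "bin_digit (2^m*B) t = bin_digit B (t - m)"
    proof -
    have "t = (t - m) + m" using False by simp
    then show ?thesis using digit_shift[of m B "t - m"] by (simp only:)
  qed
    moreover have "bin_digit B (t - m) \<noteq> 1" using tmin m False by simp
    moreover have "bin_digit B (t - m) < 2" unfolding bin_digit_def by simp
    ultimately show ?thesis by simp
  qed
  have "L + m - 1 - t = (L - 1 - t) + m" using tL by simp
  then have d3: "bin_digit (2^m*B) (L + m - 1 - t) = 0"
    using digit_shift[of m B "L - 1 - t"] d1 by (simp only:)
  have "t < L + m" using tL by simp
  from Ac[OF this] d2 d3 show False by simp
qed

theorem theorem18:
  shows "infinite {N :: nat. N > 0 \<and>
           \<not> (\<exists>A B. antipalindromic A \<and> antipalindromic B \<and> A = N * B)}"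
proof
  assume "finite {N :: nat. N > 0 \<and>
           \<not> (\<exists>A B. antipalindromic A \<and> antipalindromic B \<and> A = N * B)}"
  then obtain n where n: "\<forall>N \<in> {N :: nat. N > 0 \<and>
           \<not> (\<exists>A B. antipalindromic A \<and> antipalindromic B \<and> A = N * B)}. N \<le> n"
    unfolding finite_nat_set_iff_bounded_le by blast
  have "n < 2 ^ n" by (rule less_exp)
  also have "\<dots> < 2 ^ Suc n" by simp
  finally have "n < 2 ^ Suc n" .
  moreover have "2 ^ Suc n \<in> {N :: nat. N > 0 \<and>
           \<not> (\<exists>A B. antipalindromic A \<and> antipalindromic B \<and> A = N * B)}"
    using no_rep[of "Suc n"] by (simp only: mem_Collect_eq) (simp, blast)
  ultimately show False using n by (meson not_le)
qed

end
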